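(* Let $p$, $q$ be distinct prime numbers, $r, s \geq 1$ integers, and $N = p^r q^s$. Let $D \in \mathbb{Z}_N^*$ be such that $D \bmod p$ is a quadratic non-residue in $\mathbb{Z}_p$ and $D \bmod q$ is a quadratic non-residue in $\mathbb{Z}_q$. Then for all $(x,y) \in \mathcal{H}_{D,\mathbb{Z}_N}$, $$(x,y)^{\otimes\, p^{r-1}(p+1)\, q^{s-1}(q+1)} \equiv (1,0) \pmod N,$$ where the power is taken with respect to $\otimes$.
   Context: For a commutative ring $R$ and $D \in R$, let $\mathcal{H}_{D,R} = \{(x,y) \in R \times R : x^2 - D y^2 = 1\}$, equipped with the product $(x,y) \otimes (w,z) = (xw + yzD,\ yw + xz)$; this is a commutative group with identity $(1,0)$. Here $\mathbb{Z}_N$ denotes the integers modulo $N$. *)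

theory Defs
  imports "HOL-Number_Theory.Number_Theory"
begin

definition ZN :: "int \<Rightarrow> int set" where
  "ZN N = {0..<N}"

definition ZN_units :: "int \<Rightarrow> int set" where
  "ZN_units N = {a \<in> ZN N. coprime a N}"

definition pell_conic :: "int \<Rightarrow> int \<Rightarrow> (int \<times> int) set" where
  "pell_conic N D = {(x, y). x \<in> ZN N \<and> y \<in> ZN N \<and> (x^2 - D * y^2) mod N = 1 mod N}"

definition pell_mult :: "int \<Rightarrow> int \<Rightarrow> int \<times> int \<Rightarrow> int \<times> int \<Rightarrow> int \<times> int" where
  "pell_mult N D a b =
     ((fst a * fst b + snd a * snd b * D) mod N, (snd a * fst b + fst a * snd b) mod N)"

fun pell_pow :: "int \<Rightarrow> int \<Rightarrow> int \<times> int \<Rightarrow> nat \<Rightarrow> int \<times> int" where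
  "pell_pow N D a 0 = (1 mod N, 0)"
| "pell_pow N D a (Suc n) = pell_mult N D a (pell_pow N D a n)"

end

theory Submission
  imports Defs "HOL-Computational_Algebra.Polynomial"
begin


lemma fermat_int:
  fixes x :: int and p :: nat
  assumes "prime p"
  shows "[x ^ p = x] (mod int p)"
proof -
  define a where "a = nat (x mod int p)"
  have p0: "p > 0" using assms prime_gt_0_nat by blast
  have xa: "[x = int a] (mod int p)" unfolding a_def using p0
    by (simp add: cong_def)
  have "[a ^ p = a] (mod p)"
  proof (cases "p dvd a")
    case True
    then have "[a = 0] (mod p)" by (simp add: cong_0_iff)
    moreover have "[a ^ p = 0] (mod p)" using True p0 dvd_trans[OF True dvd_power[of p a]]
      by (auto simp add: cong_0_iff)
    ultimately show ?thesis by (meson cong_sym cong_trans)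
  next
    case False
    have "[a ^ (p - 1) = 1] (mod p)" using fermat_theorem[OF assms False] .
    then have "[a * a ^ (p - 1) = a * 1] (mod p)" using cong_scalar_left by blast
    moreover have "a * a ^ (p - 1) = a ^ p" using p0
      by (metis Suc_diff_1 power_Suc)
    ultimately show ?thesis by simp
  qed
  then have "[int a ^ p = int a] (mod int p)"
    by (metis cong_int_iff of_nat_power)
  moreover have "[x ^ p = int a ^ p] (mod int p)" using xa cong_pow by blast
  ultimately show ?thesis using xa by (meson cong_sym cong_trans)
qed



definition pc :: "'a::comm_ring_1 poly \<Rightarrow> 'a \<Rightarrow> 'a poly \<Rightarrow> 'a poly \<Rightarrow> bool" where
  "pc P m f g \<longleftrightarrow> (\<exists>u v. f - g = [:m:] * u + P * v)"

lemma pc_refl: "pc P m f f"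
  unfolding pc_def by (rule exI[of _ 0], rule exI[of _ 0]) simp

lemma pc_sym: "pc P m f g \<Longrightarrow> pc P m g f"
proof -
  assume "pc P m f g"
  then obtain u v where "f - g = [:m:] * u + P * v" unfolding pc_def by blast
  then have "g - f = [:m:] * (-u) + P * (-v)" by (metis minus_diff_eq minus_add_distrib mult_minus_right)
  then show ?thesis unfolding pc_def by blast
qed

lemma pc_trans: "pc P m f g \<Longrightarrow> pc P m g h \<Longrightarrow> pc P m f h"
proof -
  assume "pc P m f g" "pc P m g h"
  then obtain u v u' v' where a: "f - g = [:m:] * u + P * v" "g - h = [:m:] * u' + P * v'"
    unfolding pc_def by blast
  have "f - h = (f - g) + (g - h)" by simp
  also have "\<dots> = [:m:] * (u + u') + P * (v + v')" unfolding a by (simp add: algebra_simps smult_add_right)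
  finally show ?thesis unfolding pc_def by blast
qed

lemma pc_add: "pc P m f g \<Longrightarrow> pc P m f' g' \<Longrightarrow> pc P m (f + f') (g + g')"
proof -
  assume "pc P m f g" "pc P m f' g'"
  then obtain u v u' v' where a: "f - g = [:m:] * u + P * v" "f' - g' = [:m:] * u' + P * v'"
    unfolding pc_def by blast
  have "(f + f') - (g + g') = (f - g) + (f' - g')" by simp
  also have "\<dots> = [:m:] * (u + u') + P * (v + v')" unfolding a by (simp add: algebra_simps smult_add_right)
  finally show ?thesis unfolding pc_def by blast
qed

lemma pc_mult_left: "pc P m f g \<Longrightarrow> pc P m (h * f) (h * g)"
proof -
  assume "pc P m f g"
  then obtain u v where a: "f - g = [:m:] * u + P * v"
    unfolding pc_def by blast
  have "h * f - h * g = h * (f - g)" by (simp add: algebra_simps)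
  also have "\<dots> = [:m:] * (h * u) + P * (h * v)" unfolding a by (simp add: algebra_simps smult_add_right)
  finally show ?thesis unfolding pc_def by blast
qed

lemma pc_mult: "pc P m f g \<Longrightarrow> pc P m f' g' \<Longrightarrow> pc P m (f * f') (g * g')"
  by (metis pc_mult_left pc_trans mult.commute)

lemma pc_pow: "pc P m f g \<Longrightarrow> pc P m (f ^ n) (g ^ n)"
  by (induction n) (auto intro: pc_refl pc_mult)

lemma pc_sum: "(\<And>k. k \<in> A \<Longrightarrow> pc P m (f k) (g k)) \<Longrightarrow> pc P m (sum f A) (sum g A)"
proof (induction A rule: infinite_finite_induct)
  case (infinite A) then show ?case by (simp add: pc_refl)
next
  case empty then show ?case by (simp add: pc_refl)
next
  case (insert x F) then show ?case by (simp add: pc_add)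
qed

lemma pc_const: fixes a b m :: int shows "[a = b] (mod m) \<Longrightarrow> pc P m [:a:] [:b:]"
proof -
  assume "[a = b] (mod m)"
  then have "m dvd a - b" by (simp add: cong_iff_dvd_diff)
  then obtain k where "a - b = m * k" by (elim dvdE)
  then have "[:a:] - [:b:] = [:m:] * [:k:] + P * 0" by simp
  then show ?thesis unfolding pc_def by blast
qed

lemma pc_m0: "pc P m ([:m:] * u) 0"
  unfolding pc_def by (rule exI[of _ u], rule exI[of _ 0]) simp

lemma pc_P0: "pc P m (P * v) 0"
  unfolding pc_def by (rule exI[of _ 0], rule exI[of _ v]) simp

lemma pc_dvd: "pc P (m * k) f g \<Longrightarrow> pc P m f g"
proof -
  assume "pc P (m * k) f g"
  then obtain u v where a: "f - g = [:m * k:] * u + P * v" unfolding pc_def by blast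
  have "[:m * k:] = [:m:] * [:k:]" by simp
  then have "f - g = [:m:] * ([:k:] * u) + P * v" using a by (simp add: ac_simps)
  then show ?thesis unfolding pc_def by blast
qed

lemma pc_crt:
  fixes a b :: int
  assumes "coprime a b" "pc P a h 0" "pc P b h 0"
  shows "pc P (a * b) h 0"
proof -
  obtain u1 v1 where h1: "h = [:a:] * u1 + P * v1" using assms(2) unfolding pc_def by auto
  obtain u2 v2 where h2: "h = [:b:] * u2 + P * v2" using assms(3) unfolding pc_def by auto
  obtain x y where xy: "x * a + y * b = 1" using bezout_int[of a b] assms(1) by auto
  have ab: "[:a * b:] = [:a:] * [:b:]" by simp
  have "h = [:x * a + y * b:] * h" using xy by simp
  also have "\<dots> = [:x:] * [:a:] * h + [:y:] * [:b:] * h" by (simp add: algebra_simps smult_add_left)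
  also have "\<dots> = [:x:] * [:a:] * ([:b:] * u2 + P * v2) + [:y:] * [:b:] * ([:a:] * u1 + P * v1)"
    using h1 h2 by metis
  also have "\<dots> = [:a * b:] * ([:x:] * u2 + [:y:] * u1) + P * ([:x:] * [:a:] * v2 + [:y:] * [:b:] * v1)"
    unfolding ab by (simp add: algebra_simps smult_add_right smult_add_left)
  finally show ?thesis unfolding pc_def by auto
qed



lemma id1: "[:x,y:] = [:x:] + [:0,1:] * [:(y::int):]" by simp
lemma id2: "[:0,1:]^2 - [:D:] = [:-D,0,1::int:] * 1" by (simp add: power2_eq_square)
lemma id3: "[:x,-y:] * [:x,y:] - [:x^2 - D*y^2:] = [:-D,0,1::int:] * [:-(y^2):]"
  by (simp add: power2_eq_square algebra_simps)
lemma id4: "[:x,y:] * [:u,v:] - [:x*u + y*v*D, y*u + x*v:] = [:-D,0,1::int:] * [:y*v:]"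
  by (simp add: algebra_simps)
lemma id5: "pCons (a::int) ([:-D,0,1:]*w + [:c0,c1:]) = [:-D,0,1:]*(pCons 0 w + [:c1:]) + [:a + c1*D, c0:]"
  by (simp add: algebra_simps)
lemma id6: "[:y:] * ([:0,1:] * [:-1:]) = [:0, -(y::int):]" by simp
lemma id7: "[:x:] + [:0, -(y::int):] = [:x,-y:]" by simp


lemma pc_binom:
  fixes a b :: "int poly"
  assumes "prime p"
  shows "pc P (int p) ((a + b) ^ p) (a ^ p + b ^ p)"
proof -
  define f where "f k = of_nat (p choose k) * a ^ k * b ^ (p - k)" for k
  define g where "g k = (if k = 0 \<or> k = p then f k else 0)" for k
  have p0: "p > 0" using assms prime_gt_0_nat by blast
  have "(a + b) ^ p = sum f {..p}" unfolding f_def by (rule binomial_ring)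
  moreover have "pc P (int p) (sum f {..p}) (sum g {..p})"
  proof (rule pc_sum)
    fix k assume k: "k \<in> {..p}"
    show "pc P (int p) (f k) (g k)"
    proof (cases "k = 0 \<or> k = p")
      case True then show ?thesis by (simp add: g_def pc_refl)
    next
      case False
      then have "p dvd (p choose k)" using k p0 assms by (intro dvd_choose_prime) auto
      then obtain c where c: "p choose k = p * c" by (elim dvdE)
      have fk: "f k = [:int p:] * ([:int c:] * a ^ k * b ^ (p - k))"
        unfolding f_def c by (simp add: of_nat_poly mult.assoc ac_simps)
      have gk: "g k = 0" using False by (simp add: g_def)
      show ?thesis unfolding fk gk by (rule pc_m0)
    qed
  qed
  moreover have "sum g {..p} = a ^ p + b ^ p"
  proof -
    have s: "{..p} = insert p (insert 0 {1..<p})" using p0 by auto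
    have "sum g {1..<p} = 0" by (rule sum.neutral) (auto simp: g_def)
    then show ?thesis unfolding s using p0 by (simp add: g_def f_def)
  qed
  ultimately show ?thesis by simp
qed

lemma frob:
  fixes x y D :: int
  assumes "prime p" "p > 2" "[D ^ ((p - 1) div 2) = -1] (mod int p)"
  shows "pc [:-D,0,1:] (int p) ([:x,y:] ^ p) [:x,-y:]"
proof -
  let ?P = "[:-D,0,1::int:]"
  let ?t = "[:0,1::int:]"
  define m where "m = (p - 1) div 2"
  have "odd p" using prime_odd_nat assms(1,2) by auto
  then have pm: "p = Suc (2 * m)" unfolding m_def by presburger
  have 1: "pc ?P (int p) ([:x,y:] ^ p) ([:x:] ^ p + ([:0,1:] * [:y:]) ^ p)"
    using pc_binom[OF assms(1)] by (metis id1)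
  have 2: "pc ?P (int p) ([:x:] ^ p) [:x:]"
    unfolding poly_const_pow by (rule pc_const) (rule fermat_int[OF assms(1)])
  have t2: "pc ?P (int p) (?t ^ 2) [:D:]"
  proof -
    have "?t ^ 2 - [:D:] = [:int p:] * 0 + ?P * 1" using id2[of D] by simp
    then show ?thesis unfolding pc_def by blast
  qed
  have tp: "?t ^ p = ?t * (?t ^ 2) ^ m" unfolding pm by (simp add: power_mult)
  have A: "pc ?P (int p) (?t * (?t ^ 2) ^ m) (?t * [:D:] ^ m)"
    by (intro pc_mult pc_refl pc_pow t2)
  have B: "pc ?P (int p) (?t * [:D:] ^ m) (?t * [:-1:])"
    unfolding poly_const_pow using assms(3) by (intro pc_mult pc_refl pc_const) (simp add: m_def)
  have t3: "pc ?P (int p) (?t ^ p) (?t * [:-1:])" unfolding tp by (rule pc_trans[OF A B])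
  have eq: "([:0,1:] * [:y:]) ^ p = [:y ^ p:] * ?t ^ p"
    unfolding power_mult_distrib poly_const_pow by (rule mult.commute)
  have 3: "pc ?P (int p) (([:0,1:] * [:y:]) ^ p) ([:y:] * (?t * [:-1:]))"
    unfolding eq by (intro pc_mult t3 pc_const fermat_int[OF assms(1)])
  have 4: "pc ?P (int p) ([:x:] ^ p + ([:0,1:] * [:y:]) ^ p) ([:x:] + [:y:] * (?t * [:-1:]))"
    using 2 3 by (rule pc_add)
  show ?thesis using pc_trans[OF 1 4] by (simp only: id6 id7)
qed

lemma norm_step:
  fixes x y D :: int
  assumes "prime p" "p > 2" "[D ^ ((p - 1) div 2) = -1] (mod int p)"
    "[x^2 - D*y^2 = 1] (mod int p)"
  shows "pc [:-D,0,1:] (int p) ([:x,y:] ^ (p + 1)) 1"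
proof -
  let ?P = "[:-D,0,1::int:]"
  have e: "[:x,y:] ^ (p + 1) = [:x,y:] ^ p * [:x,y:]" by simp
  have A: "pc ?P (int p) ([:x,y:] ^ p * [:x,y:]) ([:x,-y:] * [:x,y:])"
    by (intro pc_mult frob assms pc_refl)
  have B: "pc ?P (int p) ([:x,-y:] * [:x,y:]) [:x^2 - D*y^2:]"
  proof -
    have "[:x,-y:] * [:x,y:] - [:x^2 - D*y^2:] = [:int p:] * 0 + ?P * [:-(y^2):]" using id3[of x y D] by simp
    then show ?thesis unfolding pc_def by blast
  qed
  have C: "pc ?P (int p) [:x^2 - D*y^2:] [:1:]" using assms(4) by (rule pc_const)
  show ?thesis unfolding e using pc_trans[OF pc_trans[OF A B] C] by (simp only: one_pCons)
qed


lemma lift_step: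
  fixes m :: int and g :: "int poly" and n :: nat
  assumes "k \<ge> 1" "pc P (m ^ k) g 1" "int n = m"
  shows "pc P (m ^ (k + 1)) (g ^ n) 1"
proof -
  obtain u v where uv: "g - 1 = [:m ^ k:] * u + P * v" using assms(2) unfolding pc_def by blast
  define z where "z = [:m ^ k:] * u"
  have "pc P (m ^ (k + 1)) g (1 + z)"
  proof -
    have "g - (1 + z) = [:m ^ (k + 1):] * 0 + P * v" using uv unfolding z_def by (simp add: algebra_simps)
    then show ?thesis unfolding pc_def by blast
  qed
  then have a: "pc P (m ^ (k + 1)) (g ^ n) ((1 + z) ^ n)" by (rule pc_pow)
  have e: "(1 + z) ^ n - 1 = z * (\<Sum>i<n. (1 + z) ^ i)"
    using power_diff_1_eq[of "1 + z" n] by simp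
  have zm: "pc P m z 0"
  proof -
    have mk: "m ^ k = m * m ^ (k - 1)" using assms(1) by (cases k) auto
    have "z = [:m:] * ([:m ^ (k - 1):] * u)" unfolding z_def mk by (simp add: mult.commute)
    then show ?thesis by (simp only: pc_m0)
  qed
  have A: "pc P m (\<Sum>i<n. (1 + z) ^ i) (\<Sum>i<n. (1 + 0) ^ i)"
    by (intro pc_sum pc_pow pc_add pc_refl zm)
  have B: "(\<Sum>i<n. (1 + 0 :: int poly) ^ i) = [:m:] * 1"
    using assms(3) by (simp add: of_nat_poly)
  have "pc P m (\<Sum>i<n. (1 + z) ^ i) 0" using pc_trans[OF A[unfolded B] pc_m0] .
  then obtain w v' where wv: "(\<Sum>i<n. (1 + z) ^ i) = [:m:] * w + P * v'"
    unfolding pc_def by auto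
  have "(1 + z) ^ n - 1 = z * ([:m:] * w + P * v')" using e by (simp only: wv)
  also have "\<dots> = [:m ^ (k + 1):] * (u * w) + P * (z * v')"
    unfolding z_def by (simp add: algebra_simps smult_add_right)
  finally have "(1 + z) ^ n - 1 = [:m ^ (k + 1):] * (u * w) + P * (z * v')" .
  then have "pc P (m ^ (k + 1)) ((1 + z) ^ n) 1" unfolding pc_def by blast
  then show ?thesis by (rule pc_trans[OF a])
qed



lemma lift_iter:
  assumes "pc P (int p) b 1"
  shows "pc P (int p ^ (j + 1)) (b ^ (p ^ j)) 1"
proof (induction j)
  case 0 then show ?case using assms by simp
next
  case (Suc j)
  have "b ^ (p ^ Suc j) = b ^ (p ^ j * p)" by (simp add: mult.commute)
  also have "\<dots> = (b ^ (p ^ j)) ^ p" by (rule power_mult)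
  finally have "b ^ (p ^ Suc j) = (b ^ (p ^ j)) ^ p" .
  moreover have "pc P (int p ^ (j + 1 + 1)) ((b ^ (p ^ j)) ^ p) 1"
    by (rule lift_step[OF _ Suc.IH]) auto
  ultimately show ?case by simp
qed

lemma pc_pow1: "pc P M f 1 \<Longrightarrow> pc P M (f ^ n) 1"
  using pc_pow[of P M f 1 n] by simp

lemma local_order:
  fixes x y D :: int
  assumes "prime p" "p > 2" "[D ^ ((p - 1) div 2) = -1] (mod int p)"
    "[x^2 - D*y^2 = 1] (mod int p)" "r \<ge> 1"
  shows "pc [:-D,0,1:] (int p ^ r) ([:x,y:] ^ (p ^ (r - 1) * (p + 1))) 1"
proof -
  have "pc [:-D,0,1:] (int p ^ (r - 1 + 1)) (([:x,y:] ^ (p + 1)) ^ (p ^ (r - 1))) 1"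
    by (rule lift_iter, rule norm_step[OF assms(1-4)])
  moreover have "r - 1 + 1 = r" using assms(5) by simp
  moreover have "([:x,y:] ^ (p + 1)) ^ (p ^ (r - 1)) = [:x,y:] ^ (p ^ (r - 1) * (p + 1))"
    by (metis power_mult mult.commute)
  ultimately show ?thesis by simp
qed

lemma reduce: "\<exists>w c0 c1. u = [:-D,0,1::int:] * w + [:c0,c1:]"
proof (induction u)
  case 0
  show ?case by (rule exI[of _ 0], rule exI[of _ 0], rule exI[of _ 0]) simp
next
  case (pCons a u)
  then obtain w c0 c1 where "u = [:-D,0,1::int:] * w + [:c0,c1:]" by blast
  then have "pCons a u = [:-D,0,1:]*(pCons 0 w + [:c1:]) + [:a + c1*D, c0:]"
    using id5 by simp
  then show ?case by blast
qed

lemma extract_dvd: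
  fixes N a b D :: int
  assumes "pc [:-D,0,1:] N [:a,b:] 1"
  shows "N dvd a - 1 \<and> N dvd b"
proof -
  let ?P = "[:-D,0,1::int:]"
  obtain u v where uv: "[:a,b:] - 1 = [:N:] * u + ?P * v" using assms unfolding pc_def by blast
  obtain w c0 c1 where wc: "u = ?P * w + [:c0,c1:]" using reduce by blast
  define R where "R = [:a - 1 - N*c0, b - N*c1:]"
  have "R = ([:a,b:] - 1) - [:N:] * [:c0,c1:]" unfolding R_def by (simp add: one_pCons algebra_simps)
  also have "\<dots> = ?P * (v + [:N:] * w)" unfolding uv wc by (simp add: algebra_simps smult_add_right)
  finally have RP: "R = ?P * (v + [:N:] * w)" .
  have dR: "degree R \<le> 1" unfolding R_def
    using degree_pCons_le[of "a - 1 - N*c0" "[:b - N*c1:]"] by simp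
  have "R = 0"
  proof (rule ccontr)
    assume "R \<noteq> 0"
    then have "v + [:N:] * w \<noteq> 0" using RP by auto
    then have "degree R = 2 + degree (v + [:N:] * w)" unfolding RP
      by (subst degree_mult_eq) auto
    then show False using dR by simp
  qed
  then have "a - 1 - N*c0 = 0" "b - N*c1 = 0" unfolding R_def by simp_all
  then show ?thesis by (metis dvd_triv_left eq_iff_diff_eq_0)
qed

lemma pc_const2:
  fixes a b a' b' m :: int
  assumes "[a = a'] (mod m)" "[b = b'] (mod m)"
  shows "pc P m [:a,b:] [:a',b':]"
  using pc_add[OF pc_const[OF assms(1)] pc_mult[OF pc_refl pc_const[OF assms(2)]], of P "[:0,1:]"]
  by (simp only: id1[symmetric])

lemma conn:
  "pc [:-D,0,1:] N ([:x,y:] ^ n) [:fst (pell_pow N D (x,y) n), snd (pell_pow N D (x,y) n):]"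
proof (induction n)
  case 0
  have e1: "[:x,y:] ^ 0 = [:1:]" by (simp add: one_pCons)
  have e2: "[:fst (pell_pow N D (x,y) 0), snd (pell_pow N D (x,y) 0):] = [:1 mod N:]" by simp
  show ?case unfolding e1 e2 by (rule pc_const) simp
next
  case (Suc n)
  obtain u v where uv: "pell_pow N D (x,y) n = (u, v)" by fastforce
  have A: "pc [:-D,0,1:] N ([:x,y:] ^ Suc n) ([:x,y:] * [:u,v:])"
    using pc_mult[OF pc_refl Suc.IH[unfolded uv fst_conv snd_conv], of "[:x,y:]"] by simp
  have B: "pc [:-D,0,1:] N ([:x,y:] * [:u,v:]) [:x*u + y*v*D, y*u + x*v:]"
  proof -
    have "[:x,y:] * [:u,v:] - [:x*u + y*v*D, y*u + x*v:] = [:N:] * 0 + [:-D,0,1:] * [:y*v:]"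
      using id4 by simp
    then show ?thesis unfolding pc_def by blast
  qed
  have C: "pc [:-D,0,1:] N [:x*u + y*v*D, y*u + x*v:] [:(x*u + y*v*D) mod N, (y*u + x*v) mod N:]"
    by (rule pc_const2) simp_all
  have "pell_pow N D (x,y) (Suc n) = ((x*u + y*v*D) mod N, (y*u + x*v) mod N)"
    by (simp add: uv pell_mult_def)
  then show ?case using pc_trans[OF pc_trans[OF A B] C] by simp
qed



lemma euler_nonres:
  fixes D :: int
  assumes "prime p" "\<not> QuadRes (int p) (D mod int p)"
  shows "p > 2" "[D ^ ((p - 1) div 2) = -1] (mod int p)"
proof -
  have nq: "\<not> QuadRes (int p) D" using assms(2) by (simp add: QuadRes_def)
  show p2: "p > 2"
  proof (rule ccontr)
    assume "\<not> p > 2"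
    then have "p = 2" using prime_ge_2_nat[OF assms(1)] by simp
    moreover have "D mod 2 = 0 \<or> D mod 2 = 1" by auto
    then have "[(D mod 2)^2 = D] (mod 2)" by (auto simp: cong_def power2_eq_square)
    ultimately show False using nq unfolding QuadRes_def by auto
  qed
  have nz: "\<not> [D = 0] (mod int p)"
  proof
    assume "[D = 0] (mod int p)"
    then have "[0^2 = D] (mod int p)" by (simp add: cong_sym)
    then show False using nq unfolding QuadRes_def by blast
  qed
  have "Legendre D (int p) = -1" using nz nq by (simp add: Legendre_def)
  then show "[D ^ ((p - 1) div 2) = -1] (mod int p)"
    using euler_criterion[OF assms(1) p2, of D] by (simp add: cong_sym)
qed

theorem mainTheorem2:
  fixes p q r s :: nat and N D :: int
  assumes "prime p" and "prime q" and "p \<noteq> q"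
    and "r \<ge> 1" and "s \<ge> 1"
    and "N = int (p ^ r * q ^ s)"
    and "D \<in> ZN_units N"
    and "\<not> QuadRes (int p) (D mod int p)"
    and "\<not> QuadRes (int q) (D mod int q)"
  shows "\<forall>xy \<in> pell_conic N D.
           pell_pow N D xy (p ^ (r - 1) * (p + 1) * q ^ (s - 1) * (q + 1)) = (1, 0)"
proof
  fix xy assume "xy \<in> pell_conic N D"
  then obtain x y where xy: "xy = (x, y)" and nrm: "(x^2 - D * y^2) mod N = 1 mod N"
    unfolding pell_conic_def by auto
  let ?P = "[:-D,0,1::int:]"
  let ?a = "[:x,y:]"
  define Ep where "Ep = p ^ (r - 1) * (p + 1)"
  define Eq where "Eq = q ^ (s - 1) * (q + 1)"
  define E where "E = p ^ (r - 1) * (p + 1) * q ^ (s - 1) * (q + 1)"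
  have EE: "E = Ep * Eq" "E = Eq * Ep" unfolding E_def Ep_def Eq_def by (simp_all only: ac_simps)
  have Npq: "N = int p ^ r * int q ^ s" using assms(6) by simp
  have ncN: "[x^2 - D*y^2 = 1] (mod N)" using nrm by (simp add: cong_def)
  have "int p dvd N" unfolding Npq using assms(4)
    by (simp add: dvd_power_le dvd_mult2)
  then have ncp: "[x^2 - D*y^2 = 1] (mod int p)" using ncN cong_dvd_modulus by blast
  have "int q dvd N" unfolding Npq using assms(5)
    by (simp add: dvd_power_le dvd_mult)
  then have ncq: "[x^2 - D*y^2 = 1] (mod int q)" using ncN cong_dvd_modulus by blast
  note ep = euler_nonres[OF assms(1) assms(8)]
  note eq = euler_nonres[OF assms(2) assms(9)]
  have Lp: "pc ?P (int p ^ r) (?a ^ Ep) 1"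
    unfolding Ep_def by (rule local_order[OF assms(1) ep ncp assms(4)])
  have Lq: "pc ?P (int q ^ s) (?a ^ Eq) 1"
    unfolding Eq_def by (rule local_order[OF assms(2) eq ncq assms(5)])
  have Hp: "pc ?P (int p ^ r) (?a ^ E - 1) 0"
    using pc_pow1[OF Lp, of Eq] unfolding EE(1) power_mult pc_def by simp
  have Hq: "pc ?P (int q ^ s) (?a ^ E - 1) 0"
    using pc_pow1[OF Lq, of Ep] unfolding EE(2) power_mult pc_def by simp
  have cop: "coprime (int p ^ r) (int q ^ s)"
    using primes_coprime[OF assms(1-3)] by simp
  have "pc ?P N (?a ^ E - 1) 0" unfolding Npq by (rule pc_crt[OF cop Hp Hq])
  then have HN: "pc ?P N (?a ^ E) 1" unfolding pc_def by simp
  define u where "u = fst (pell_pow N D (x,y) E)"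
  define v where "v = snd (pell_pow N D (x,y) E)"
  have "pc ?P N [:u,v:] 1"
    using pc_trans[OF pc_sym[OF conn[of D N x y E]] HN] unfolding u_def v_def .
  then have dv: "N dvd u - 1" "N dvd v" using extract_dvd by auto
  have Npos: "N > 1"
  proof -
    have p2: "p \<ge> 2" using prime_ge_2_nat[OF assms(1)] .
    have "p ^ 1 \<le> p ^ r" by (rule power_increasing) (use assms(4) p2 in auto)
    then have pr: "p ^ r \<ge> 2" using p2 by simp
    have qs: "q ^ s \<ge> 1" using prime_gt_0_nat[OF assms(2)] by simp
    have "2 * 1 \<le> p ^ r * q ^ s" by (rule mult_le_mono[OF pr qs])
    then have "p ^ r * q ^ s \<ge> 2" by simp
    then show ?thesis unfolding assms(6) by linarith
  qed
  have "E > 0" unfolding E_def using prime_gt_0_nat[OF assms(2)] prime_gt_0_nat[OF assms(1)] by simp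
  then obtain E' where E': "E = Suc E'" by (cases E) auto
  have uv: "u = (x * fst (pell_pow N D (x,y) E') + y * snd (pell_pow N D (x,y) E') * D) mod N"
    "v = (y * fst (pell_pow N D (x,y) E') + x * snd (pell_pow N D (x,y) E')) mod N"
    unfolding u_def v_def E' by (simp_all add: pell_mult_def)
  have um: "u mod N = u" and vm: "v mod N = v" unfolding uv by simp_all
  have "[u = 1] (mod N)" using dv(1) by (simp add: cong_iff_dvd_diff)
  then have "u mod N = 1 mod N" by (simp add: cong_def)
  moreover have "1 mod N = 1" using Npos by simp
  ultimately have u1: "u = 1" using um by simp
  have "v mod N = 0" using dv(2) by simp
  then have v0: "v = 0" using vm by simp
  have "pell_pow N D (x,y) E = (u, v)" unfolding u_def v_def by simp
  then show "pell_pow N D xy (p ^ (r - 1) * (p + 1) * q ^ (s - 1) * (q + 1)) = (1, 0)"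
    unfolding xy E_def[symmetric] u1 v0 .
qed

end
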